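(* Consider any instance $\mathcal{I}$ of the online volunteer notification problem (defined in the context) whose inter-activity time distribution $g$ has minimum discrete hazard rate $q$. Then the sparse notification (SN) policy is $\frac{1}{2-q}\left(1-\frac{1}{e}\right)$-competitive, i.e., for every such instance, $\mathbf{POL}_{\mathcal{I}} \ge \frac{1}{2-q}\left(1-\frac{1}{e}\right)\mathbf{LP}_{\mathcal{I}}$, where $\mathbf{POL}_{\mathcal{I}}$ is the expected number of tasks completed by the SN policy.
   Context: Online volunteer notification problem. An instance $\mathcal{I}$ consists of volunteers $[V]=\{1,\dots,V\}$, task types $[S]$, a horizon $T\in\mathbb{N}$, arrival probabilities $\lambda_{s,t}\ge 0$ ($s\in[S],t\in[T]$) with $\sum_{s=1}^S\lambda_{s,t}\le 1$, match probabilities $p_{v,s}\in[0,1]$, and a probability mass function $g$ on the positive integers (inter-activity time distribution) with CDF $G(\tau)=\sum_{i=1}^{\tau}g(i)$, $G(0)=0$. In each period $t$ at most one task arrives: of type $s$ with probability $\lambda_{s,t}$, and none with probability $\lambda_{0,t}:=1-\sum_{s}\lambda_{s,t}$, independently across periods. Each volunteer is at each time active or inactive; all are initially active. When a task arrives, the platform immediately and irrevocably notifies a subset of volunteers. Each notified active volunteer $v$ responds positively to a type-$s$ task independently with probability $p_{v,s}$; the task is completed iff at least one notified active volunteer responds. An active volunteer who is notified at time $t$ becomes inactive (regardless of her response) and becomes active again at time $t+Z$, where $Z$ is drawn independently with $\Pr(Z=\tau)=g(\tau)$; inactive volunteers ignore notifications and are unaffected by them. The platform knows $\lambda,p,g$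 but does not observe volunteers' states; an online policy decides whom to notify using only information available up to the current period. $\mathbf{POL}_{\mathcal{I}}$ denotes the expected number of completed tasks. Minimum discrete hazard rate (MDHR): $q=\min_{\tau\in\mathbb{N}}\frac{g(\tau)}{1-G(\tau-1)}$, with $\frac00:=1$. Benchmark: $\mathcal{P}$ is the set of $\mathbf{x}\in\mathbb{R}^{V\times S\times T}$ with $0\le x_{v,s,t}\le 1$ for all $v,s,t$ and $\sum_{\tau=1}^t\sum_{s=1}^S\lambda_{s,\tau}x_{v,s,\tau}(1-G(t-\tau))\le 1$ for all $v,t$. $\mathbf{LP}_{\mathcal{I}}=\max_{\mathbf{x}\in\mathcal{P}}\sum_{t=1}^T\sum_{s=1}^S\lambda_{s,t}\min\{\sum_{v=1}^V x_{v,s,t}p_{v,s},1\}$. A policy is $c$-competitive if $\mathbf{POL}_{\mathcal{I}}\ge c\,\mathbf{LP}_{\mathcal{I}}$ for every instance. Ex ante solution: $f(\mathbf{x})=\sum_{t=1}^T\sum_{s=1}^S\lambda_{s,t}\big(1-\prod_{v=1}^V(1-x_{v,s,t}p_{v,s})\big)$. Let $\mathbf{x}^*_{LP}$ be an optimal solution of $\mathbf{LP}_{\mathcal{I}}$; $\mathbf{x}^*_{AA}$ the output of the procedure (for some $m\in\mathbb{N}$): $\mathbf{x}^0=\mathbf{0}$, for $i=1,\dots,m$: $\mathbf{y}^i\in\arg\max_{\mathbf{x}\in\mathcal{P}}\langle \mathbf{x},\nabla f(\mathbf{x}^{i-1})\rangle$, $\mathbf{x}^i=\mathbf{x}^{i-1}+\mathbf{y}^i/m$,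 output $\mathbf{x}^m$; and $\mathbf{x}^*_{SQ}$ obtained sequentially for $v=1,\dots,V$: $(x^{SQ}_{v,s,t})_{s,t}$ is an optimal solution of $\max\sum_{t,s}\lambda_{s,t}\big(\prod_{u<v}(1-p_{u,s}x^{SQ}_{u,s,t})\big)p_{v,s}x_{v,s,t}$ subject to $0\le x_{v,s,t}\le1$ and $\sum_{\tau=1}^t\sum_s\lambda_{s,\tau}x_{v,s,\tau}(1-G(t-\tau))\le1$ for all $t$. Then $\mathbf{x}^*\in\arg\max_{\mathbf{x}\in\{\mathbf{x}^*_{LP},\mathbf{x}^*_{AA},\mathbf{x}^*_{SQ}\}}f(\mathbf{x})$. SN policy: Offline, for $v=1,\dots,V$ in order: set $r_{v,s,t}=p_{v,s}\prod_{u=1}^{v-1}(1-\tilde x_{u,s,t}p_{u,s})$, $J_{v,T+1}=0$; for $t=T$ down to $1$: for $s\in[S]$, $\tilde x_{v,s,t}=x^*_{v,s,t}\,\mathbb{I}\{r_{v,s,t}+\sum_{\tau=t+1}^T g(\tau-t)J_{v,\tau}\ge J_{v,t+1}\}$ (with $\tilde x_{v,0,t}=r_{v,0,t}=0$), and $J_{v,t}=\sum_{s=0}^S\lambda_{s,t}\big((1-\tilde x_{v,s,t})J_{v,t+1}+\tilde x_{v,s,t}(r_{v,s,t}+\sum_{\tau=t+1}^T g(\tau-t)J_{v,\tau})\big)$. Online: when a task of type $s$ arrives at time $t$, notify each volunteer $v$ independently with probability $\tilde x_{v,s,t}$. *)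

theory Defs
  imports "HOL-Analysis.Analysis" "HOL-Probability.Probability"
begin

text \<open>Volunteers are 1..nV, task types 1..nS, periods 1..nT.
  lam s t = arrival probability of type s in period t; pm v s = match probability;
  gZ = distribution of the inter-activity time Z (a pmf on the positive integers).\<close>

record inst =
  nV :: nat
  nS :: nat
  nT :: nat
  lam :: "nat \<Rightarrow> nat \<Rightarrow> real"
  pm :: "nat \<Rightarrow> nat \<Rightarrow> real"
  gZ :: "nat pmf"

definition valid_inst :: "inst \<Rightarrow> bool" where
  "valid_inst I \<longleftrightarrow>
     (\<forall>s\<in>{1..nS I}. \<forall>t\<in>{1..nT I}. 0 \<le> lam I s t) \<and>
     (\<forall>t\<in>{1..nT I}. (\<Sum>s=1..nS I. lam I s t) \<le> 1) \<and>
     (\<forall>v\<in>{1..nV I}. \<forall>s\<in>{1..nS I}. 0 \<le> pm I v s \<and> pm I v s \<le> 1) \<and>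
     pmf (gZ I) 0 = 0"

definition lam0 :: "inst \<Rightarrow> nat \<Rightarrow> real" where
  "lam0 I t = 1 - (\<Sum>s=1..nS I. lam I s t)"

definition gg :: "inst \<Rightarrow> nat \<Rightarrow> real" where
  "gg I \<tau> = pmf (gZ I) \<tau>"

definition GG :: "inst \<Rightarrow> nat \<Rightarrow> real" where
  "GG I \<tau> = (\<Sum>i=1..\<tau>. gg I i)"

text \<open>discrete hazard rate with the convention 0/0 := 1\<close>
definition hazard :: "inst \<Rightarrow> nat \<Rightarrow> real" where
  "hazard I \<tau> = (if gg I \<tau> = 0 \<and> 1 - GG I (\<tau> - 1) = 0 then 1
                 else gg I \<tau> / (1 - GG I (\<tau> - 1)))"

definition is_mdhr :: "inst \<Rightarrow> real \<Rightarrow> bool" where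
  "is_mdhr I q \<longleftrightarrow> q \<in> hazard I ` {1..} \<and> (\<forall>\<tau>\<ge>1. q \<le> hazard I \<tau>)"

type_synonym sol = "nat \<Rightarrow> nat \<Rightarrow> nat \<Rightarrow> real"  \<comment> \<open>x v s t\<close>

definition inP :: "inst \<Rightarrow> sol \<Rightarrow> bool" where
  "inP I x \<longleftrightarrow>
     (\<forall>v\<in>{1..nV I}. \<forall>s\<in>{1..nS I}. \<forall>t\<in>{1..nT I}. 0 \<le> x v s t \<and> x v s t \<le> 1) \<and>
     (\<forall>v\<in>{1..nV I}. \<forall>t\<in>{1..nT I}.
        (\<Sum>\<tau>=1..t. \<Sum>s=1..nS I. lam I s \<tau> * x v s \<tau> * (1 - GG I (t - \<tau>))) \<le> 1)"

definition LPobj :: "inst \<Rightarrow> sol \<Rightarrow> real" where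
  "LPobj I x = (\<Sum>t=1..nT I. \<Sum>s=1..nS I.
      lam I s t * min (\<Sum>v=1..nV I. x v s t * pm I v s) 1)"

definition LPval :: "inst \<Rightarrow> real" where
  "LPval I = Sup (LPobj I ` {x. inP I x})"

definition LP_opt :: "inst \<Rightarrow> sol \<Rightarrow> bool" where
  "LP_opt I x \<longleftrightarrow> inP I x \<and> (\<forall>y. inP I y \<longrightarrow> LPobj I y \<le> LPobj I x)"

definition fexa :: "inst \<Rightarrow> sol \<Rightarrow> real" where
  "fexa I x = (\<Sum>t=1..nT I. \<Sum>s=1..nS I.
      lam I s t * (1 - (\<Prod>v=1..nV I. 1 - x v s t * pm I v s)))"

definition grad_f :: "inst \<Rightarrow> sol \<Rightarrow> sol" where
  "grad_f I x v s t = lam I s t * pm I v s * (\<Prod>u\<in>{1..nV I} - {v}. 1 - x u s t * pm I u s)"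

definition inner_sol :: "inst \<Rightarrow> sol \<Rightarrow> sol \<Rightarrow> real" where
  "inner_sol I x y = (\<Sum>v=1..nV I. \<Sum>s=1..nS I. \<Sum>t=1..nT I. x v s t * y v s t)"

text \<open>x_AA: output of the continuous-greedy procedure with m steps and iterates xs, directions ys\<close>
definition AA_output :: "inst \<Rightarrow> nat \<Rightarrow> (nat \<Rightarrow> sol) \<Rightarrow> (nat \<Rightarrow> sol) \<Rightarrow> sol \<Rightarrow> bool" where
  "AA_output I m xs ys x \<longleftrightarrow>
     m \<ge> 1 \<and> xs 0 = (\<lambda>v s t. 0) \<and>
     (\<forall>i\<in>{1..m}.
        inP I (ys i) \<and>
        (\<forall>y. inP I y \<longrightarrow> inner_sol I y (grad_f I (xs (i - 1))) \<le> inner_sol I (ys i) (grad_f I (xs (i - 1)))) \<and>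
        xs i = (\<lambda>v s t. xs (i - 1) v s t + ys i v s t / real m)) \<and>
     x = xs m"

definition SQ_feas :: "inst \<Rightarrow> (nat \<Rightarrow> nat \<Rightarrow> real) \<Rightarrow> bool" where
  "SQ_feas I y \<longleftrightarrow>
     (\<forall>s\<in>{1..nS I}. \<forall>t\<in>{1..nT I}. 0 \<le> y s t \<and> y s t \<le> 1) \<and>
     (\<forall>t\<in>{1..nT I}. (\<Sum>\<tau>=1..t. \<Sum>s=1..nS I. lam I s \<tau> * y s \<tau> * (1 - GG I (t - \<tau>))) \<le> 1)"

definition SQ_obj :: "inst \<Rightarrow> sol \<Rightarrow> nat \<Rightarrow> (nat \<Rightarrow> nat \<Rightarrow> real) \<Rightarrow> real" where
  "SQ_obj I x v y = (\<Sum>t=1..nT I. \<Sum>s=1..nS I.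
      lam I s t * (\<Prod>u\<in>{1..<v}. 1 - pm I u s * x u s t) * pm I v s * y s t)"

definition SQ_output :: "inst \<Rightarrow> sol \<Rightarrow> bool" where
  "SQ_output I x \<longleftrightarrow>
     (\<forall>v\<in>{1..nV I}. SQ_feas I (x v) \<and> (\<forall>y. SQ_feas I y \<longrightarrow> SQ_obj I x v y \<le> SQ_obj I x v (x v)))"

definition xstar_choice :: "inst \<Rightarrow> sol \<Rightarrow> sol \<Rightarrow> sol \<Rightarrow> sol \<Rightarrow> bool" where
  "xstar_choice I xLP xAA xSQ xs \<longleftrightarrow>
     xs \<in> {xLP, xAA, xSQ} \<and> (\<forall>y\<in>{xLP, xAA, xSQ}. fexa I y \<le> fexa I xs)"

text \<open>Offline part of the SN policy: arrays xt (= x tilde), r, J satisfying the defining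
  backward recursion (which determines them uniquely on the relevant index ranges).\<close>
definition SN_arrays :: "inst \<Rightarrow> sol \<Rightarrow> sol \<Rightarrow> sol \<Rightarrow> (nat \<Rightarrow> nat \<Rightarrow> real) \<Rightarrow> bool" where
  "SN_arrays I xs xt r J \<longleftrightarrow>
     (\<forall>v\<in>{1..nV I}. \<forall>s\<in>{1..nS I}. \<forall>t\<in>{1..nT I}.
        r v s t = pm I v s * (\<Prod>u\<in>{1..<v}. 1 - xt u s t * pm I u s)) \<and>
     (\<forall>v\<in>{1..nV I}. J v (nT I + 1) = 0) \<and>
     (\<forall>v\<in>{1..nV I}. \<forall>s\<in>{1..nS I}. \<forall>t\<in>{1..nT I}.
        xt v s t = xs v s t *
          (if r v s t + (\<Sum>\<tau>=t+1..nT I. gg I (\<tau> - t) * J v \<tau>) \<ge> J v (t + 1) then 1 else 0)) \<and>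
     (\<forall>v\<in>{1..nV I}. \<forall>t\<in>{1..nT I}.
        J v t = lam0 I t * J v (t + 1) +
          (\<Sum>s=1..nS I. lam I s t * ((1 - xt v s t) * J v (t + 1) +
              xt v s t * (r v s t + (\<Sum>\<tau>=t+1..nT I. gg I (\<tau> - t) * J v \<tau>)))))"

text \<open>Online part / stochastic process. For each volunteer, independently:
  (notified?, responds positively?, inter-activity time Z).\<close>
definition vol_pmf :: "inst \<Rightarrow> sol \<Rightarrow> nat \<Rightarrow> nat \<Rightarrow> nat \<Rightarrow> (bool \<times> bool \<times> nat) pmf" where
  "vol_pmf I xt v s t = pair_pmf (bernoulli_pmf (xt v s t)) (pair_pmf (bernoulli_pmf (pm I v s)) (gZ I))"

text \<open>State a: volunteer v is active at time t iff a v \<le> t (all initially active: a = 0).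
  polval I xt n t a = expected number of tasks completed in periods t, ..., t+n-1
  under SN (notification probabilities xt) starting in state a at period t.\<close>
primrec polval :: "inst \<Rightarrow> sol \<Rightarrow> nat \<Rightarrow> nat \<Rightarrow> (nat \<Rightarrow> nat) \<Rightarrow> real" where
  "polval I xt 0 t a = 0"
| "polval I xt (Suc n) t a =
     lam0 I t * polval I xt n (Suc t) a +
     (\<Sum>s=1..nS I. lam I s t *
        measure_pmf.expectation (Pi_pmf {1..nV I} (False, False, 0) (\<lambda>v. vol_pmf I xt v s t))
          (\<lambda>\<omega>. (if \<exists>v\<in>{1..nV I}. fst (\<omega> v) \<and> a v \<le> t \<and> fst (snd (\<omega> v)) then 1 else 0)
               + polval I xt n (Suc t)
                   (\<lambda>v. if v \<in> {1..nV I} \<and> fst (\<omega> v) \<and> a v \<le> t then t + snd (snd (\<omega> v)) else a v)))"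

definition POL_SN :: "inst \<Rightarrow> sol \<Rightarrow> real" where
  "POL_SN I xt = polval I xt (nT I) 1 (\<lambda>v. 0)"

end

theory Submission
  imports Defs
begin

lemma integral_bind_pmf_bdd:
  fixes f :: "'b \<Rightarrow> real"
  assumes "\<And>x. \<bar>f x\<bar> \<le> B"
  shows "measure_pmf.expectation (bind_pmf A F) f = measure_pmf.expectation A (\<lambda>x. measure_pmf.expectation (F x) f)"
  unfolding measure_pmf_bind
  apply (rule integral_bind[where K="count_space UNIV" and B=B and B'=1])
  using assms by (auto simp: measure_pmf_in_subprob_space measure_pmf.emeasure_space_1 measure_pmf.finite_measure_axioms)

lemma integral_pair_pmf_bdd:
  fixes f :: "'a \<times> 'b \<Rightarrow> real"
  assumes "\<And>x. \<bar>f x\<bar> \<le> B"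
  shows "measure_pmf.expectation (pair_pmf A C) f = measure_pmf.expectation A (\<lambda>x. measure_pmf.expectation C (\<lambda>y. f (x, y)))"
  unfolding pair_pmf_def
  apply (subst integral_bind_pmf_bdd[where B=B])
  using assms apply simp
  apply (subst integral_bind_pmf_bdd[where B=B])
  using assms by simp_all

lemma gg_nn: "0 \<le> gg I \<tau>" by (simp add: gg_def)

lemma GG_nn: "0 \<le> GG I \<tau>" unfolding GG_def by (intro sum_nonneg gg_nn)

lemma GG_le1: "GG I \<tau> \<le> 1"
proof -
  have "GG I \<tau> = measure (measure_pmf (gZ I)) {1..\<tau>}"
    by (simp add: GG_def gg_def measure_measure_pmf_finite)
  also have "\<dots> \<le> 1" by simp
  finally show ?thesis .
qed

lemma GG_Suc: "GG I (Suc k) = GG I k + gg I (Suc k)" by (simp add: GG_def)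

lemma GG_0[simp]: "GG I 0 = 0" by (simp add: GG_def)

lemma hazard_bound:
  assumes "is_mdhr I q" "1 \<le> j"
  shows "1 - GG I j \<le> (1 - q) * (1 - GG I (j - 1))"
proof -
  obtain k where j: "j = Suc k" using assms(2) by (cases j) auto
  have qh: "q \<le> hazard I j" using assms unfolding is_mdhr_def by auto
  have G: "GG I j = GG I k + gg I j" using GG_Suc j by simp
  have le: "GG I j \<le> 1" by (rule GG_le1)
  have gn: "0 \<le> gg I j" by (rule gg_nn)
  show ?thesis
  proof (cases "gg I j = 0 \<and> 1 - GG I (j - 1) = 0")
    case True then show ?thesis using G j by simp
  next
    case False
    then have D: "1 - GG I k > 0" using G j le gn by auto
    have "hazard I j = gg I j / (1 - GG I (j - 1))" using False unfolding hazard_def by simp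
    then have "q \<le> gg I j / (1 - GG I k)" using qh j by simp
    then have "q * (1 - GG I k) \<le> gg I j" using D by (simp add: field_simps)
    then show ?thesis using G j by (simp add: algebra_simps)
  qed
qed

lemma q_le1:
  assumes "is_mdhr I q" shows "q \<le> 1"
proof -
  have "q \<le> hazard I 1" using assms unfolding is_mdhr_def by auto
  also have "hazard I 1 = gg I 1" unfolding hazard_def by simp
  also have "\<dots> \<le> 1" by (simp add: gg_def pmf_le_1)
  finally show ?thesis .
qed

lemma abel:
  fixes f :: "nat \<Rightarrow> real"
  shows "(\<Sum>\<sigma>=t+1..t+k. (f \<sigma> - f (\<sigma>+1)) * GG I (\<sigma> - t))
       = (\<Sum>\<tau>=t+1..t+k. gg I (\<tau> - t) * (f \<tau> - f (t+k+1)))"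
proof (induction k)
  case 0 then show ?case by simp
next
  case (Suc k)
  have sh: "(\<Sum>\<tau>=t+1..t+k. gg I (\<tau> - t)) = GG I k"
    using sum.shift_bounds_cl_nat_ivl[of "\<lambda>\<tau>. gg I (\<tau> - t)" 1 t k]
    by (simp add: GG_def add.commute)
  have "(\<Sum>\<tau>=t+1..t+Suc k. gg I (\<tau> - t) * (f \<tau> - f (t+Suc k+1)))
      = (\<Sum>\<tau>=t+1..t+k. gg I (\<tau> - t) * (f \<tau> - f (t+Suc k+1))) + gg I (Suc k) * (f (Suc (t+k)) - f (t+Suc k+1))"
    by simp
  also have "(\<Sum>\<tau>=t+1..t+k. gg I (\<tau> - t) * (f \<tau> - f (t+Suc k+1)))
      = (\<Sum>\<tau>=t+1..t+k. gg I (\<tau> - t) * (f \<tau> - f (t+k+1))) + (\<Sum>\<tau>=t+1..t+k. gg I (\<tau> - t)) * (f (t+k+1) - f (t+Suc k+1))"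
  proof -
    have e: "\<And>c. (\<Sum>\<tau>=t+1..t+k. gg I (\<tau> - t) * (f \<tau> - c)) = (\<Sum>\<tau>=t+1..t+k. gg I (\<tau> - t) * f \<tau>) - (\<Sum>\<tau>=t+1..t+k. gg I (\<tau> - t)) * c"
      by (simp add: right_diff_distrib sum_subtractf sum_distrib_right)
    show ?thesis unfolding e by (simp add: algebra_simps)
  qed
  finally show ?case using Suc sh GG_Suc[of I k] by (simp add: algebra_simps)
qed

lemma tele:
  fixes f :: "nat \<Rightarrow> real"
  assumes "t \<le> T"
  shows "(\<Sum>\<sigma>=t+1..T. f \<sigma> - f (\<sigma>+1)) = f (t+1) - f (T+1)"
proof -
  have "(\<Sum>\<sigma>=t+1..T. (- f) (Suc \<sigma>) - (- f) \<sigma>) = (- f) (Suc T) - (- f) (t+1)"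
    by (rule sum_Suc_diff) (use assms in simp)
  then show ?thesis by simp
qed

lemma key:
  assumes valid: "valid_inst I" and mdhr: "is_mdhr I q"
    and SN: "SN_arrays I xs xt r J" and v: "v \<in> {1..nV I}"
    and xs01: "\<forall>s\<in>{1..nS I}. \<forall>t\<in>{1..nT I}. 0 \<le> xs v s t \<and> xs v s t \<le> 1"
    and cons: "\<forall>t\<in>{1..nT I}. (\<Sum>\<tau>=1..t. \<Sum>s=1..nS I. lam I s \<tau> * xs v s \<tau> * (1 - GG I (t - \<tau>))) \<le> 1"
  shows "(\<Sum>t=1..nT I. \<Sum>s=1..nS I. lam I s t * xs v s t * r v s t) \<le> (2 - q) * J v 1"
proof -
  define T where "T = nT I"
  define S where "S = nS I"
  define E where "E t = (\<Sum>\<tau>=t+1..T. gg I (\<tau> - t) * J v \<tau>)" for t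
  define d where "d \<sigma> = J v \<sigma> - J v (\<sigma>+1)" for \<sigma>
  define y where "y t = (\<Sum>s=1..S. lam I s t * xs v s t)" for t
  define w where "w t = (\<Sum>s=1..S. lam I s t * xs v s t * r v s t)" for t
  note SNu = SN[unfolded SN_arrays_def]
  have SN2: "\<forall>v\<in>{1..nV I}. J v (nT I + 1) = 0" using SNu by blast
  have SN3: "\<forall>v\<in>{1..nV I}. \<forall>s\<in>{1..nS I}. \<forall>t\<in>{1..nT I}.
        xt v s t = xs v s t *
          (if r v s t + (\<Sum>\<tau>=t+1..nT I. gg I (\<tau> - t) * J v \<tau>) \<ge> J v (t + 1) then 1 else 0)"
    using SNu by blast
  have SN4: "\<forall>v\<in>{1..nV I}. \<forall>t\<in>{1..nT I}.
        J v t = lam0 I t * J v (t + 1) +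
          (\<Sum>s=1..nS I. lam I s t * ((1 - xt v s t) * J v (t + 1) +
              xt v s t * (r v s t + (\<Sum>\<tau>=t+1..nT I. gg I (\<tau> - t) * J v \<tau>))))"
    using SNu by blast
  have JT: "J v (T+1) = 0" using SN2 v unfolding T_def by blast
  have lamnn: "0 \<le> lam I s t" if "s \<in> {1..S}" "t \<in> {1..T}" for s t
    using valid that unfolding valid_inst_def S_def T_def by auto
  have ynn: "0 \<le> y t" if "t \<in> {1..T}" for t
    unfolding y_def using lamnn xs01 that by (auto simp: S_def T_def intro!: sum_nonneg)
  have rec: "d t = (\<Sum>s=1..S. lam I s t * (xt v s t * (r v s t + E t - J v (t+1))))"
    if t: "t \<in> {1..T}" for t
  proof -
    have Jt: "J v t = lam0 I t * J v (t + 1) +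
          (\<Sum>s=1..S. lam I s t * ((1 - xt v s t) * J v (t + 1) +
              xt v s t * (r v s t + E t)))"
      unfolding S_def T_def E_def using SN4 v t unfolding T_def by blast
    have "(\<Sum>s=1..S. lam I s t * ((1 - xt v s t) * J v (t + 1) + xt v s t * (r v s t + E t)))
        = (\<Sum>s=1..S. lam I s t) * J v (t+1) + (\<Sum>s=1..S. lam I s t * (xt v s t * (r v s t + E t - J v (t+1))))"
    proof -
      have "(\<Sum>s=1..S. lam I s t * ((1 - xt v s t) * J v (t + 1) + xt v s t * (r v s t + E t)))
         = (\<Sum>s=1..S. lam I s t * J v (t + 1) + lam I s t * (xt v s t * (r v s t + E t - J v (t+1))))"
        by (rule sum.cong) (simp_all add: algebra_simps)
      also have "\<dots> = (\<Sum>s=1..S. lam I s t) * J v (t+1) + (\<Sum>s=1..S. lam I s t * (xt v s t * (r v s t + E t - J v (t+1))))"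
        by (simp add: sum.distrib sum_distrib_right)
      finally show ?thesis .
    qed
    then show ?thesis using Jt unfolding d_def lam0_def S_def by (simp add: algebra_simps)
  qed
  have dterm: "0 \<le> lam I s t * (xt v s t * (r v s t + E t - J v (t+1)))
      \<and> lam I s t * (xs v s t * (r v s t + E t - J v (t+1))) \<le> lam I s t * (xt v s t * (r v s t + E t - J v (t+1)))"
    if s: "s \<in> {1..S}" and t: "t \<in> {1..T}" for s t
  proof -
    have xt: "xt v s t = xs v s t * (if r v s t + E t \<ge> J v (t + 1) then 1 else 0)"
      unfolding S_def T_def E_def using SN3 v s t unfolding T_def S_def by blast
    have "0 \<le> xs v s t" using xs01 s t unfolding S_def T_def by auto
    moreover have "0 \<le> lam I s t" using lamnn s t .
    moreover note xt
    ultimately show ?thesis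
    proof (cases "r v s t + E t \<ge> J v (t + 1)")
      case True
      assume a: "0 \<le> xs v s t" "0 \<le> lam I s t" "xt v s t = xs v s t * (if r v s t + E t \<ge> J v (t + 1) then 1 else 0)"
      have e: "xt v s t = xs v s t" using a(3) True by simp
      have "0 \<le> r v s t + E t - J v (t+1)" using True by simp
      then show ?thesis using a e by simp
    next
      case False
      assume a: "0 \<le> xs v s t" "0 \<le> lam I s t" "xt v s t = xs v s t * (if r v s t + E t \<ge> J v (t + 1) then 1 else 0)"
      have e: "xt v s t = 0" using a(3) False by simp
      have "xs v s t * (r v s t + E t - J v (t+1)) \<le> 0" using False a by (simp add: mult_nonneg_nonpos)
      then have "lam I s t * (xs v s t * (r v s t + E t - J v (t+1))) \<le> 0" using a by (simp add: mult_nonneg_nonpos)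
      then show ?thesis using e by simp
    qed
  qed
  have dnn: "0 \<le> d t" if "t \<in> {1..T}" for t
    unfolding rec[OF that] using dterm that by (auto intro!: sum_nonneg)
  have dlow: "w t - y t * (J v (t+1) - E t) \<le> d t" if t: "t \<in> {1..T}" for t
  proof -
    have "w t - y t * (J v (t+1) - E t) = (\<Sum>s=1..S. lam I s t * (xs v s t * (r v s t + E t - J v (t+1))))"
    proof -
      have "(\<Sum>s=1..S. lam I s t * (xs v s t * (r v s t + E t - J v (t+1))))
          = (\<Sum>s=1..S. lam I s t * xs v s t * r v s t + lam I s t * xs v s t * (E t - J v (t+1)))"
        by (rule sum.cong) (simp_all add: algebra_simps)
      also have "\<dots> = w t + y t * (E t - J v (t+1))"
        unfolding w_def y_def by (simp add: sum.distrib sum_distrib_right)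
      finally show ?thesis by (simp add: algebra_simps)
    qed
    also have "\<dots> \<le> d t" unfolding rec[OF t] using dterm t by (auto intro!: sum_mono)
    finally show ?thesis .
  qed
  have teleJ: "J v (t+1) = (\<Sum>\<sigma>=t+1..T. d \<sigma>)" if "t \<le> T" for t
    unfolding d_def using tele[OF that, of "J v"] JT by simp
  have abelE: "E t = (\<Sum>\<sigma>=t+1..T. d \<sigma> * GG I (\<sigma> - t))" if "t \<le> T" for t
  proof -
    define k where "k = T - t"
    have k: "t + k = T" using that unfolding k_def by simp
    have ab: "(\<Sum>\<sigma>=t+1..t+k. (J v \<sigma> - J v (\<sigma>+1)) * GG I (\<sigma> - t))
       = (\<Sum>\<tau>=t+1..t+k. gg I (\<tau> - t) * (J v \<tau> - J v (t+k+1)))"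
      by (rule abel)
    have JT': "J v (t+k+1) = 0" using JT k by simp
    have "(\<Sum>\<sigma>=t+1..T. d \<sigma> * GG I (\<sigma> - t)) = (\<Sum>\<tau>=t+1..T. gg I (\<tau> - t) * J v \<tau>)"
      using ab JT unfolding k d_def by simp
    then show ?thesis unfolding E_def by simp
  qed
  have X: "J v (t+1) - E t = (\<Sum>\<sigma>=t+1..T. d \<sigma> * (1 - GG I (\<sigma> - t)))" if "t \<le> T" for t
  proof -
    have "(\<Sum>\<sigma>=t+1..T. d \<sigma>) - (\<Sum>\<sigma>=t+1..T. d \<sigma> * GG I (\<sigma> - t)) = (\<Sum>\<sigma>=t+1..T. d \<sigma> - d \<sigma> * GG I (\<sigma> - t))"
      by (rule sum_subtractf[symmetric])
    also have "\<dots> = (\<Sum>\<sigma>=t+1..T. d \<sigma> * (1 - GG I (\<sigma> - t)))"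
      by (simp add: right_diff_distrib)
    finally show ?thesis using teleJ[OF that] abelE[OF that] by simp
  qed
  have J1: "J v 1 = (\<Sum>\<sigma>=1..T. d \<sigma>)" using teleJ[of 0] by simp
  have swap: "(\<Sum>t=1..T. \<Sum>\<sigma>=t+1..T. F t \<sigma>) = (\<Sum>\<sigma>=1..T. \<Sum>t\<in>{1..<\<sigma>}. F t \<sigma>)" for F :: "nat \<Rightarrow> nat \<Rightarrow> real"
  proof -
    have "(\<Sum>t=1..T. \<Sum>\<sigma>\<in>{\<sigma>. \<sigma> \<in> {1..T} \<and> t < \<sigma>}. F t \<sigma>) = (\<Sum>\<sigma>=1..T. \<Sum>t\<in>{t. t \<in> {1..T} \<and> t < \<sigma>}. F t \<sigma>)"
      by (rule sum.swap_restrict) auto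
    moreover have A: "{\<sigma>. \<sigma> \<in> {1..T} \<and> t < \<sigma>} = {t+1..T}" for t by auto
    moreover have B: "{t. t \<in> {1..T} \<and> t < \<sigma>} = {1..<\<sigma>}" if "\<sigma> \<in> {1..T}" for \<sigma> using that by auto
    ultimately show ?thesis
      by (metis (no_types, lifting) sum.cong)
  qed
  have Cb: "(\<Sum>t\<in>{1..<\<sigma>}. y t * (1 - GG I (\<sigma> - t))) \<le> 1 - q" if s: "\<sigma> \<in> {1..T}" for \<sigma>
  proof (cases "\<sigma> = 1")
    case True then show ?thesis using q_le1[OF mdhr] by simp
  next
    case False
    have "(\<Sum>t\<in>{1..<\<sigma>}. y t * (1 - GG I (\<sigma> - t))) \<le> (\<Sum>t\<in>{1..<\<sigma>}. (1 - q) * (y t * (1 - GG I (\<sigma> - 1 - t))))"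
    proof (rule sum_mono)
      fix t assume t: "t \<in> {1..<\<sigma>}"
      have h1: "1 - GG I (\<sigma> - t) \<le> (1 - q) * (1 - GG I (\<sigma> - 1 - t))"
      proof -
        have "1 \<le> \<sigma> - t" using t by auto
        from hazard_bound[OF mdhr this] show ?thesis by (simp add: diff_commute)
      qed
      have h2: "0 \<le> y t" using ynn t s by simp
      have "y t * (1 - GG I (\<sigma> - t)) \<le> y t * ((1 - q) * (1 - GG I (\<sigma> - 1 - t)))"
        by (rule mult_left_mono[OF h1 h2])
      then show "y t * (1 - GG I (\<sigma> - t)) \<le> (1 - q) * (y t * (1 - GG I (\<sigma> - 1 - t)))"
        by (simp add: ac_simps)
    qed
    also have "\<dots> = (1 - q) * (\<Sum>t=1..\<sigma>-1. y t * (1 - GG I (\<sigma> - 1 - t)))"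
      using False s by (simp add: sum_distrib_left atLeastLessThanSuc_atLeastAtMost[symmetric])
    also have "(\<Sum>t=1..\<sigma>-1. y t * (1 - GG I (\<sigma> - 1 - t))) \<le> 1"
    proof -
      have "(\<Sum>t=1..\<sigma>-1. y t * (1 - GG I (\<sigma> - 1 - t))) = (\<Sum>\<tau>=1..\<sigma>-1. \<Sum>s=1..nS I. lam I s \<tau> * xs v s \<tau> * (1 - GG I (\<sigma> - 1 - \<tau>)))"
        unfolding y_def S_def by (simp add: sum_distrib_right)
      also have "\<dots> \<le> 1"
      proof -
        have m: "\<sigma> - 1 \<in> {1..nT I}" using False s unfolding T_def by auto
        show ?thesis by (rule bspec[OF cons m])
      qed
      finally show ?thesis .
    qed
    then have "(1 - q) * (\<Sum>t=1..\<sigma>-1. y t * (1 - GG I (\<sigma> - 1 - t))) \<le> (1 - q) * 1"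
      using q_le1[OF mdhr] by (intro mult_left_mono) auto
    finally show ?thesis by simp
  qed
  have "(\<Sum>t=1..T. w t) \<le> (\<Sum>t=1..T. d t + y t * (J v (t+1) - E t))"
    using dlow by (intro sum_mono) (simp add: algebra_simps)
  also have "\<dots> = J v 1 + (\<Sum>t=1..T. \<Sum>\<sigma>=t+1..T. y t * (d \<sigma> * (1 - GG I (\<sigma> - t))))"
  proof -
    have "(\<Sum>t=1..T. d t + y t * (J v (t+1) - E t)) = (\<Sum>t=1..T. d t) + (\<Sum>t=1..T. y t * (J v (t+1) - E t))"
      by (rule sum.distrib)
    moreover have "(\<Sum>t=1..T. y t * (J v (t+1) - E t)) = (\<Sum>t=1..T. \<Sum>\<sigma>=t+1..T. y t * (d \<sigma> * (1 - GG I (\<sigma> - t))))"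
    proof (rule sum.cong[OF refl])
      fix t assume "t \<in> {1..T}"
      then have "J v (t+1) - E t = (\<Sum>\<sigma>=t+1..T. d \<sigma> * (1 - GG I (\<sigma> - t)))" using X by auto
      then show "y t * (J v (t+1) - E t) = (\<Sum>\<sigma>=t+1..T. y t * (d \<sigma> * (1 - GG I (\<sigma> - t))))"
        by (simp add: sum_distrib_left)
    qed
    ultimately show ?thesis using J1 by simp
  qed
  also have "(\<Sum>t=1..T. \<Sum>\<sigma>=t+1..T. y t * (d \<sigma> * (1 - GG I (\<sigma> - t))))
      = (\<Sum>\<sigma>=1..T. d \<sigma> * (\<Sum>t\<in>{1..<\<sigma>}. y t * (1 - GG I (\<sigma> - t))))"
    unfolding swap[of "\<lambda>t \<sigma>. y t * (d \<sigma> * (1 - GG I (\<sigma> - t)))"]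
    by (rule sum.cong[OF refl]) (simp add: sum_distrib_left ac_simps)
  also have "\<dots> \<le> (\<Sum>\<sigma>=1..T. d \<sigma> * (1 - q))"
    using Cb dnn by (intro sum_mono mult_left_mono) auto
  also have "\<dots> = (1 - q) * J v 1" unfolding J1 sum_distrib_left by (simp add: mult.commute)
  finally show ?thesis unfolding w_def S_def T_def by (simp add: algebra_simps)
qed

lemma pmf_integrable_bdd:
  fixes f :: "'a \<Rightarrow> real"
  assumes "\<And>x. \<bar>f x\<bar> \<le> B"
  shows "integrable (measure_pmf M) f"
  by (rule measure_pmf.integrable_const_bound[where B=B]) (use assms in auto)

lemma pmf_exp_const: "measure_pmf.expectation M (\<lambda>_. c) = (c::real)"
  by simp

lemma vol_exp:
  fixes f :: "bool \<times> bool \<times> nat \<Rightarrow> real"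
  assumes bd: "\<And>x. \<bar>f x\<bar> \<le> B"
    and x01: "0 \<le> xt v s t" "xt v s t \<le> 1" and p01: "0 \<le> pm I v s" "pm I v s \<le> 1"
  shows "measure_pmf.expectation (vol_pmf I xt v s t) f =
     xt v s t * (pm I v s * measure_pmf.expectation (gZ I) (\<lambda>z. f (True, True, z))
                 + (1 - pm I v s) * measure_pmf.expectation (gZ I) (\<lambda>z. f (True, False, z)))
   + (1 - xt v s t) * (pm I v s * measure_pmf.expectation (gZ I) (\<lambda>z. f (False, True, z))
                 + (1 - pm I v s) * measure_pmf.expectation (gZ I) (\<lambda>z. f (False, False, z)))"
proof -
  have "measure_pmf.expectation (vol_pmf I xt v s t) f =
     measure_pmf.expectation (bernoulli_pmf (xt v s t)) (\<lambda>b. measure_pmf.expectation (pair_pmf (bernoulli_pmf (pm I v s)) (gZ I)) (\<lambda>y. f (b, y)))"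
    unfolding vol_pmf_def by (rule integral_pair_pmf_bdd[where B=B]) (rule bd)
  also have "(\<lambda>b. measure_pmf.expectation (pair_pmf (bernoulli_pmf (pm I v s)) (gZ I)) (\<lambda>y. f (b, y)))
     = (\<lambda>b. measure_pmf.expectation (bernoulli_pmf (pm I v s)) (\<lambda>c. measure_pmf.expectation (gZ I) (\<lambda>z. f (b, c, z))))"
    by (rule ext, rule integral_pair_pmf_bdd[where B=B]) (use bd in auto)
  finally show ?thesis using x01 p01 by (simp add: ac_simps)
qed

definition Wf :: "inst \<Rightarrow> (nat \<Rightarrow> nat \<Rightarrow> real) \<Rightarrow> nat \<Rightarrow> nat \<Rightarrow> real" where
  "Wf I J v \<tau> = (if \<tau> \<le> nT I then J v \<tau> else 0)"

lemma Wf_bd: "\<bar>Wf I J v x\<bar> \<le> (\<Sum>\<tau>=0..nT I. \<bar>J v \<tau>\<bar>)"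
proof (cases "x \<le> nT I")
  case True
  then have "\<bar>J v x\<bar> \<le> (\<Sum>\<tau>=0..nT I. \<bar>J v \<tau>\<bar>)"
    by (intro member_le_sum) auto
  then show ?thesis using True by (simp add: Wf_def)
next
  case False then show ?thesis by (simp add: Wf_def sum_nonneg)
qed

lemma gexp:
  assumes valid: "valid_inst I" and t: "t \<le> nT I"
  shows "measure_pmf.expectation (gZ I) (\<lambda>z. Wf I J v (max (Suc t) (t + z)))
       = (\<Sum>\<tau>=t+1..nT I. gg I (\<tau> - t) * J v \<tau>)"
proof -
  have p0: "pmf (gZ I) 0 = 0" using valid unfolding valid_inst_def by simp
  have "measure_pmf.expectation (gZ I) (\<lambda>z. Wf I J v (max (Suc t) (t + z)))
      = (\<Sum>z\<in>{1..nT I - t}. Wf I J v (max (Suc t) (t + z)) * pmf (gZ I) z)"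
  proof (rule integral_measure_pmf_real)
    fix z assume z: "z \<in> set_pmf (gZ I)" "Wf I J v (max (Suc t) (t + z)) \<noteq> 0"
    have "z \<noteq> 0" using z(1) p0 by (metis set_pmf_iff)
    then show "z \<in> {1..nT I - t}" using z(2) by (auto simp: Wf_def split: if_splits)
  qed simp
  also have "\<dots> = (\<Sum>z\<in>{1..nT I - t}. gg I z * J v (z + t))"
    by (rule sum.cong) (auto simp: Wf_def gg_def add.commute)
  also have "\<dots> = (\<Sum>\<tau>=t+1..nT I. gg I (\<tau> - t) * J v \<tau>)"
    using sum.shift_bounds_cl_nat_ivl[of "\<lambda>\<tau>. gg I (\<tau> - t) * J v \<tau>" 1 t "nT I - t"] t
    by simp
  finally show ?thesis .
qed

lemma prod_tele:
  fixes e :: "nat \<Rightarrow> real"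
  shows "1 - (\<Prod>v\<in>{1..n}. 1 - e v) = (\<Sum>v=1..n. e v * (\<Prod>u\<in>{1..<v}. 1 - e u))"
proof (induction n)
  case 0 then show ?case by simp
next
  case (Suc n)
  have "(\<Prod>u\<in>{1..<Suc n}. 1 - e u) = (\<Prod>u\<in>{1..n}. 1 - e u)"
    by (simp add: atLeastLessThanSuc_atLeastAtMost)
  then show ?case using Suc by (simp add: algebra_simps)
qed

lemma lam_nn: "valid_inst I \<Longrightarrow> s \<in> {1..nS I} \<Longrightarrow> t \<in> {1..nT I} \<Longrightarrow> 0 \<le> lam I s t"
  unfolding valid_inst_def by auto

lemma lam0_nn: "valid_inst I \<Longrightarrow> t \<in> {1..nT I} \<Longrightarrow> 0 \<le> lam0 I t"
  unfolding valid_inst_def lam0_def by auto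

lemma lam0_sum: "lam0 I t + (\<Sum>s=1..nS I. lam I s t) = 1"
  unfolding lam0_def by simp

lemma polval_bnd:
  assumes valid: "valid_inst I"
  shows "1 \<le> t \<Longrightarrow> t + n = nT I + 1 \<Longrightarrow> 0 \<le> polval I xt n t a \<and> polval I xt n t a \<le> real n"
proof (induction n arbitrary: t a)
  case 0 then show ?case by simp
next
  case (Suc n)
  have t: "t \<in> {1..nT I}" using Suc.prems by auto
  have IH: "0 \<le> polval I xt n (Suc t) b \<and> polval I xt n (Suc t) b \<le> real n" for b
    using Suc.IH[of "Suc t" b] Suc.prems by simp
  define F where "F = (\<lambda>\<omega>::nat \<Rightarrow> bool \<times> bool \<times> nat. (if \<exists>v\<in>{1..nV I}. fst (\<omega> v) \<and> a v \<le> t \<and> fst (snd (\<omega> v)) then 1 else 0)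
               + polval I xt n (Suc t)
                   (\<lambda>v. if v \<in> {1..nV I} \<and> fst (\<omega> v) \<and> a v \<le> t then t + snd (snd (\<omega> v)) else a v))"
  have Fb: "0 \<le> F \<omega> \<and> F \<omega> \<le> 1 + real n" for \<omega>
  proof -
    let ?b = "(\<lambda>v. if v \<in> {1..nV I} \<and> fst (\<omega> v) \<and> a v \<le> t then t + snd (snd (\<omega> v)) else a v)"
    have "0 \<le> polval I xt n (Suc t) ?b \<and> polval I xt n (Suc t) ?b \<le> real n" by (rule IH)
    then show ?thesis unfolding F_def by (simp split: if_splits)
  qed
  have Eb: "0 \<le> measure_pmf.expectation M F \<and> measure_pmf.expectation M F \<le> 1 + real n" for M
  proof
    show "0 \<le> measure_pmf.expectation M F" by (rule Bochner_Integration.integral_nonneg) (use Fb in auto)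
    have "integrable (measure_pmf M) F" by (rule pmf_integrable_bdd[where B="1 + real n"]) (use Fb in auto)
    then show "measure_pmf.expectation M F \<le> 1 + real n"
      by (rule measure_pmf.integral_le_const) (use Fb in auto)
  qed
  define E where "E s = measure_pmf.expectation (Pi_pmf {1..nV I} (False, False, 0) (\<lambda>v. vol_pmf I xt v s t)) F" for s
  have pv: "polval I xt (Suc n) t a = lam0 I t * polval I xt n (Suc t) a + (\<Sum>s=1..nS I. lam I s t * E s)"
    unfolding E_def F_def by simp
  have l0: "0 \<le> lam0 I t" using lam0_nn[OF valid t] .
  have ls: "0 \<le> lam I s t" if "s \<in> {1..nS I}" for s using lam_nn[OF valid that t] .
  have "0 \<le> polval I xt (Suc n) t a"
    unfolding pv using l0 ls IH Eb by (auto intro!: add_nonneg_nonneg sum_nonneg mult_nonneg_nonneg simp: E_def)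
  moreover have "polval I xt (Suc n) t a \<le> lam0 I t * (1 + real n) + (\<Sum>s=1..nS I. lam I s t * (1 + real n))"
    unfolding pv
  proof (rule add_mono)
    show "lam0 I t * polval I xt n (Suc t) a \<le> lam0 I t * (1 + real n)"
      using l0 IH[of a] by (intro mult_left_mono) auto
    show "(\<Sum>s=1..nS I. lam I s t * E s) \<le> (\<Sum>s=1..nS I. lam I s t * (1 + real n))"
      using ls Eb by (intro sum_mono mult_left_mono) (auto simp: E_def)
  qed
  moreover have "lam0 I t * (1 + real n) + (\<Sum>s=1..nS I. lam I s t * (1 + real n)) = 1 + real n"
    using lam0_sum[of I t] by (simp add: sum_distrib_right[symmetric] distrib_right[symmetric])
  ultimately show ?case by simp
qed

lemma polval_lb:
  assumes valid: "valid_inst I" and SN: "SN_arrays I xs xt r J"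
    and xt01: "\<forall>v\<in>{1..nV I}. \<forall>s\<in>{1..nS I}. \<forall>t\<in>{1..nT I}. 0 \<le> xt v s t \<and> xt v s t \<le> 1"
  shows "1 \<le> t \<Longrightarrow> t + n = nT I + 1 \<Longrightarrow> (\<Sum>v=1..nV I. Wf I J v (max t (a v))) \<le> polval I xt n t a"
proof (induction n arbitrary: t a)
  case 0
  then have "t = nT I + 1" by simp
  then show ?case by (simp add: Wf_def)
next
  case (Suc n)
  note SNu = SN[unfolded SN_arrays_def]
  have SN1: "\<forall>v\<in>{1..nV I}. \<forall>s\<in>{1..nS I}. \<forall>t\<in>{1..nT I}.
        r v s t = pm I v s * (\<Prod>u\<in>{1..<v}. 1 - xt u s t * pm I u s)" using SNu by blast
  have SN2: "\<forall>v\<in>{1..nV I}. J v (nT I + 1) = 0" using SNu by blast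
  have SN4: "\<forall>v\<in>{1..nV I}. \<forall>t\<in>{1..nT I}.
        J v t = lam0 I t * J v (t + 1) +
          (\<Sum>s=1..nS I. lam I s t * ((1 - xt v s t) * J v (t + 1) +
              xt v s t * (r v s t + (\<Sum>\<tau>=t+1..nT I. gg I (\<tau> - t) * J v \<tau>))))"
    using SNu by blast
  have t: "t \<in> {1..nT I}" using Suc.prems by auto
  have tT: "t \<le> nT I" using t by simp
  define B where "B b = (\<Sum>v=1..nV I. Wf I J v (max (Suc t) (b v)))" for b :: "nat \<Rightarrow> nat"
  have IH: "B b \<le> polval I xt n (Suc t) b" for b
    using Suc.IH[of "Suc t" b] Suc.prems unfolding B_def by simp
  define MB where "MB = (\<Sum>v=1..nV I. \<Sum>\<tau>=0..nT I. \<bar>J v \<tau>\<bar>)"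
  have Bb: "\<bar>B b\<bar> \<le> MB" for b
    unfolding B_def MB_def by (rule order_trans[OF sum_abs]) (intro sum_mono Wf_bd)
  have Pb: "\<bar>polval I xt n (Suc t) b\<bar> \<le> real n" for b
    using polval_bnd[OF valid, of "Suc t" n xt b] Suc.prems by simp
  define a' where "a' \<omega> = (\<lambda>v. if v \<in> {1..nV I} \<and> fst (\<omega> v) \<and> a v \<le> t then t + snd (snd (\<omega> v)) else a v)"
    for \<omega> :: "nat \<Rightarrow> bool \<times> bool \<times> nat"
  define ind where "ind \<omega> = (if \<exists>v\<in>{1..nV I}. fst (\<omega> v) \<and> a v \<le> t \<and> fst (snd (\<omega> v)) then 1 else 0 :: real)"
    for \<omega> :: "nat \<Rightarrow> bool \<times> bool \<times> nat"
  define Pi where "Pi s = Pi_pmf {1..nV I} (False, False, 0) (\<lambda>v. vol_pmf I xt v s t)" for s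
  define Et where "Et v = (\<Sum>\<tau>=t+1..nT I. gg I (\<tau> - t) * J v \<tau>)" for v
  define c where "c v s = (if a v \<le> t then xt v s t * pm I v s else 0)" for v s
  define Eh where "Eh v s = (if a v \<le> t then xt v s t * Et v + (1 - xt v s t) * Wf I J v (Suc t)
                             else Wf I J v (max (Suc t) (a v)))" for v s
  define act where "act v s = (if a v \<le> t then xt v s t * r v s t else 0)" for v s
  have pv: "polval I xt (Suc n) t a = lam0 I t * polval I xt n (Suc t) a
      + (\<Sum>s=1..nS I. lam I s t * measure_pmf.expectation (Pi s) (\<lambda>\<omega>. ind \<omega> + polval I xt n (Suc t) (a' \<omega>)))"
    unfolding Pi_def ind_def a'_def by simp
  have pm01: "0 \<le> pm I v s \<and> pm I v s \<le> 1" if "v \<in> {1..nV I}" "s \<in> {1..nS I}" for v s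
    using valid that unfolding valid_inst_def by auto
  have xt01': "0 \<le> xt v s t \<and> xt v s t \<le> 1" if "v \<in> {1..nV I}" "s \<in> {1..nS I}" for v s
    using xt01 that t by auto
  have ind_b: "0 \<le> ind \<omega> \<and> ind \<omega> \<le> 1" for \<omega> unfolding ind_def by auto

  have stepa: "measure_pmf.expectation (Pi s) ind + measure_pmf.expectation (Pi s) (\<lambda>\<omega>. B (a' \<omega>))
     \<le> measure_pmf.expectation (Pi s) (\<lambda>\<omega>. ind \<omega> + polval I xt n (Suc t) (a' \<omega>))" for s
  proof -
    have i1: "integrable (measure_pmf (Pi s)) ind"
      by (rule pmf_integrable_bdd[where B=1]) (use ind_b in auto)
    have i2: "integrable (measure_pmf (Pi s)) (\<lambda>\<omega>. B (a' \<omega>))"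
      by (rule pmf_integrable_bdd[where B=MB]) (rule Bb)
    have i3: "integrable (measure_pmf (Pi s)) (\<lambda>\<omega>. ind \<omega> + polval I xt n (Suc t) (a' \<omega>))"
    proof (rule pmf_integrable_bdd[where B="1 + real n"])
      fix \<omega>
      have "\<bar>ind \<omega> + polval I xt n (Suc t) (a' \<omega>)\<bar> \<le> \<bar>ind \<omega>\<bar> + \<bar>polval I xt n (Suc t) (a' \<omega>)\<bar>"
        by (rule abs_triangle_ineq)
      also have "\<dots> \<le> 1 + real n" using ind_b[of \<omega>] Pb[of "a' \<omega>"] by (intro add_mono) auto
      finally show "\<bar>ind \<omega> + polval I xt n (Suc t) (a' \<omega>)\<bar> \<le> 1 + real n" .
    qed
    have "measure_pmf.expectation (Pi s) ind + measure_pmf.expectation (Pi s) (\<lambda>\<omega>. B (a' \<omega>))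
        = measure_pmf.expectation (Pi s) (\<lambda>\<omega>. ind \<omega> + B (a' \<omega>))"
      by (rule Bochner_Integration.integral_add[symmetric, OF i1 i2])
    also have "\<dots> \<le> measure_pmf.expectation (Pi s) (\<lambda>\<omega>. ind \<omega> + polval I xt n (Suc t) (a' \<omega>))"
      by (rule Bochner_Integration.integral_mono[OF Bochner_Integration.integrable_add[OF i1 i2] i3]) (use IH in auto)
    finally show ?thesis .
  qed

  have stepb: "measure_pmf.expectation (Pi s) ind = 1 - (\<Prod>v\<in>{1..nV I}. 1 - c v s)"
    if s: "s \<in> {1..nS I}" for s
  proof -
    define f where "f v y = 1 - (if fst y \<and> a v \<le> t \<and> fst (snd y) then 1 else 0 :: real)"
      for v and y :: "bool \<times> bool \<times> nat"
    have indp: "ind \<omega> = 1 - (\<Prod>v\<in>{1..nV I}. f v (\<omega> v))" for \<omega>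
    proof (cases "\<exists>v\<in>{1..nV I}. fst (\<omega> v) \<and> a v \<le> t \<and> fst (snd (\<omega> v))")
      case True
      then obtain v where "v \<in> {1..nV I}" "f v (\<omega> v) = 0" unfolding f_def by auto
      then have "(\<Prod>v\<in>{1..nV I}. f v (\<omega> v)) = 0" by (intro prod_zero) auto
      then show ?thesis using True unfolding ind_def by simp
    next
      case False
      then have "(\<Prod>v\<in>{1..nV I}. f v (\<omega> v)) = 1" unfolding f_def by (intro prod.neutral) auto
      then show ?thesis using False unfolding ind_def by simp
    qed
    have fb: "0 \<le> f v y \<and> f v y \<le> 1" for v y unfolding f_def by auto
    have pb: "\<bar>(\<Prod>v\<in>{1..nV I}. f v (\<omega> v))\<bar> \<le> 1" for \<omega>
    proof -
      have "0 \<le> (\<Prod>v\<in>{1..nV I}. f v (\<omega> v))" using fb by (intro prod_nonneg) auto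
      moreover have "(\<Prod>v\<in>{1..nV I}. f v (\<omega> v)) \<le> 1" using fb by (intro prod_le_1) auto
      ultimately show ?thesis by simp
    qed
    have ip: "integrable (measure_pmf (Pi s)) (\<lambda>\<omega>. \<Prod>v\<in>{1..nV I}. f v (\<omega> v))"
      by (rule pmf_integrable_bdd[where B=1]) (rule pb)
    have ie: "ind = (\<lambda>\<omega>. 1 - (\<Prod>v\<in>{1..nV I}. f v (\<omega> v)))" by (rule ext) (rule indp)
    have "measure_pmf.expectation (Pi s) ind = 1 - measure_pmf.expectation (Pi s) (\<lambda>\<omega>. \<Prod>v\<in>{1..nV I}. f v (\<omega> v))"
      unfolding ie by (subst Bochner_Integration.integral_diff[OF _ ip]) auto
    also have "measure_pmf.expectation (Pi s) (\<lambda>\<omega>. \<Prod>v\<in>{1..nV I}. f v (\<omega> v))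
        = (\<Prod>v\<in>{1..nV I}. measure_pmf.expectation (vol_pmf I xt v s t) (f v))"
      unfolding Pi_def
      by (rule expectation_prod_Pi_pmf) (auto intro: pmf_integrable_bdd[where B=1] simp: fb abs_le_iff)
    also have "\<dots> = (\<Prod>v\<in>{1..nV I}. 1 - c v s)"
    proof (rule prod.cong[OF refl])
      fix v assume v: "v \<in> {1..nV I}"
      have "measure_pmf.expectation (vol_pmf I xt v s t) (f v) =
         xt v s t * (pm I v s * measure_pmf.expectation (gZ I) (\<lambda>z. f v (True, True, z))
                 + (1 - pm I v s) * measure_pmf.expectation (gZ I) (\<lambda>z. f v (True, False, z)))
         + (1 - xt v s t) * (pm I v s * measure_pmf.expectation (gZ I) (\<lambda>z. f v (False, True, z))
                 + (1 - pm I v s) * measure_pmf.expectation (gZ I) (\<lambda>z. f v (False, False, z)))"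
        by (rule vol_exp[where B=1]) (use fb xt01'[OF v s] pm01[OF v s] in \<open>auto simp: abs_le_iff\<close>)
      also have "\<dots> = 1 - c v s"
        unfolding f_def c_def by (cases "a v \<le> t") (simp_all add: algebra_simps)
      finally show "measure_pmf.expectation (vol_pmf I xt v s t) (f v) = 1 - c v s" .
    qed
    finally show ?thesis .
  qed

  have stepc: "measure_pmf.expectation (Pi s) (\<lambda>\<omega>. B (a' \<omega>)) = (\<Sum>v=1..nV I. Eh v s)"
    if s: "s \<in> {1..nS I}" for s
  proof -
    define g where "g v y = Wf I J v (max (Suc t) (if fst y \<and> a v \<le> t then t + snd (snd y) else a v))"
      for v and y :: "bool \<times> bool \<times> nat"
    have gb: "\<bar>g v y\<bar> \<le> (\<Sum>\<tau>=0..nT I. \<bar>J v \<tau>\<bar>)" for v y unfolding g_def by (rule Wf_bd)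
    have "(\<lambda>\<omega>. B (a' \<omega>)) = (\<lambda>\<omega>. \<Sum>v=1..nV I. g v (\<omega> v))"
      unfolding B_def a'_def g_def by (intro ext sum.cong) auto
    then have "measure_pmf.expectation (Pi s) (\<lambda>\<omega>. B (a' \<omega>))
        = (\<Sum>v=1..nV I. measure_pmf.expectation (Pi s) (\<lambda>\<omega>. g v (\<omega> v)))"
      by (simp add: Bochner_Integration.integral_sum pmf_integrable_bdd[OF gb])
    also have "\<dots> = (\<Sum>v=1..nV I. Eh v s)"
    proof (rule sum.cong[OF refl])
      fix v assume v: "v \<in> {1..nV I}"
      have "measure_pmf.expectation (Pi s) (\<lambda>\<omega>. g v (\<omega> v))
          = measure_pmf.expectation (map_pmf (\<lambda>\<omega>. \<omega> v) (Pi s)) (g v)" by simp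
      also have "map_pmf (\<lambda>\<omega>. \<omega> v) (Pi s) = vol_pmf I xt v s t"
        unfolding Pi_def using v by (subst Pi_pmf_component) auto
      also have "measure_pmf.expectation (vol_pmf I xt v s t) (g v) =
         xt v s t * (pm I v s * measure_pmf.expectation (gZ I) (\<lambda>z. g v (True, True, z))
                 + (1 - pm I v s) * measure_pmf.expectation (gZ I) (\<lambda>z. g v (True, False, z)))
         + (1 - xt v s t) * (pm I v s * measure_pmf.expectation (gZ I) (\<lambda>z. g v (False, True, z))
                 + (1 - pm I v s) * measure_pmf.expectation (gZ I) (\<lambda>z. g v (False, False, z)))"
        by (rule vol_exp[OF gb]) (use xt01'[OF v s] pm01[OF v s] in auto)
      also have "\<dots> = Eh v s"
      proof (cases "a v \<le> t")
        case True
        have mx: "max (Suc t) (a v) = Suc t" using True by simp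
        have ge: "measure_pmf.expectation (gZ I) (\<lambda>z. Wf I J v (max (Suc t) (t + z))) = Et v"
          unfolding Et_def by (rule gexp[OF valid tT])
        show ?thesis unfolding g_def Eh_def using True ge by (simp add: mx algebra_simps)
      next
        case False
        show ?thesis unfolding g_def Eh_def using False by (simp add: algebra_simps)
      qed
      finally show "measure_pmf.expectation (Pi s) (\<lambda>\<omega>. g v (\<omega> v)) = Eh v s" .
    qed
    finally show ?thesis .
  qed

  have stepd: "(\<Sum>v=1..nV I. act v s) \<le> 1 - (\<Prod>v\<in>{1..nV I}. 1 - c v s)"
    if s: "s \<in> {1..nS I}" for s
  proof -
    have "(\<Sum>v=1..nV I. act v s) \<le> (\<Sum>v=1..nV I. c v s * (\<Prod>u\<in>{1..<v}. 1 - c u s))"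
    proof (rule sum_mono)
      fix v assume v: "v \<in> {1..nV I}"
      show "act v s \<le> c v s * (\<Prod>u\<in>{1..<v}. 1 - c u s)"
      proof (cases "a v \<le> t")
        case True
        have r: "r v s t = pm I v s * (\<Prod>u\<in>{1..<v}. 1 - xt u s t * pm I u s)"
          using SN1 v s t by blast
        have "(\<Prod>u\<in>{1..<v}. 1 - xt u s t * pm I u s) \<le> (\<Prod>u\<in>{1..<v}. 1 - c u s)"
        proof (rule prod_mono)
          fix u assume u: "u \<in> {1..<v}"
          then have u': "u \<in> {1..nV I}" using v by auto
          have a1: "0 \<le> xt u s t * pm I u s" using xt01'[OF u' s] pm01[OF u' s] by simp
          have a2: "xt u s t * pm I u s \<le> 1" using xt01'[OF u' s] pm01[OF u' s] by (intro mult_le_one) auto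
          have a3: "c u s \<le> xt u s t * pm I u s" unfolding c_def using a1 by simp
          show "0 \<le> 1 - xt u s t * pm I u s \<and> 1 - xt u s t * pm I u s \<le> 1 - c u s"
            using a2 a3 by simp
        qed
        moreover have "0 \<le> c v s" unfolding c_def using xt01'[OF v s] pm01[OF v s] by simp
        ultimately have "c v s * (\<Prod>u\<in>{1..<v}. 1 - xt u s t * pm I u s) \<le> c v s * (\<Prod>u\<in>{1..<v}. 1 - c u s)"
          by (rule mult_left_mono)
        then show ?thesis unfolding act_def c_def using True r by (simp add: ac_simps)
      next
        case False
        then show ?thesis unfolding act_def c_def by simp
      qed
    qed
    also have "\<dots> = 1 - (\<Prod>v\<in>{1..nV I}. 1 - c v s)"
      by (rule prod_tele[symmetric])
    finally show ?thesis .
  qed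

  have l0: "0 \<le> lam0 I t" using lam0_nn[OF valid t] .
  have ls: "0 \<le> lam I s t" if "s \<in> {1..nS I}" for s using lam_nn[OF valid that t] .

  have "lam0 I t * B a + (\<Sum>s=1..nS I. lam I s t * ((\<Sum>v=1..nV I. act v s) + (\<Sum>v=1..nV I. Eh v s)))
      \<le> polval I xt (Suc n) t a"
    unfolding pv
  proof (rule add_mono)
    show "lam0 I t * B a \<le> lam0 I t * polval I xt n (Suc t) a" by (rule mult_left_mono[OF IH l0])
    show "(\<Sum>s=1..nS I. lam I s t * ((\<Sum>v=1..nV I. act v s) + (\<Sum>v=1..nV I. Eh v s)))
      \<le> (\<Sum>s=1..nS I. lam I s t * measure_pmf.expectation (Pi s) (\<lambda>\<omega>. ind \<omega> + polval I xt n (Suc t) (a' \<omega>)))"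
    proof (rule sum_mono)
      fix s assume s: "s \<in> {1..nS I}"
      have "(\<Sum>v=1..nV I. act v s) + (\<Sum>v=1..nV I. Eh v s)
          \<le> measure_pmf.expectation (Pi s) ind + measure_pmf.expectation (Pi s) (\<lambda>\<omega>. B (a' \<omega>))"
        using stepb[OF s] stepc[OF s] stepd[OF s] by simp
      also have "\<dots> \<le> measure_pmf.expectation (Pi s) (\<lambda>\<omega>. ind \<omega> + polval I xt n (Suc t) (a' \<omega>))"
        by (rule stepa)
      finally show "lam I s t * ((\<Sum>v=1..nV I. act v s) + (\<Sum>v=1..nV I. Eh v s))
          \<le> lam I s t * measure_pmf.expectation (Pi s) (\<lambda>\<omega>. ind \<omega> + polval I xt n (Suc t) (a' \<omega>))"
        by (rule mult_left_mono) (rule ls[OF s])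
    qed
  qed
  moreover have "lam0 I t * B a + (\<Sum>s=1..nS I. lam I s t * ((\<Sum>v=1..nV I. act v s) + (\<Sum>v=1..nV I. Eh v s)))
      = (\<Sum>v=1..nV I. lam0 I t * Wf I J v (max (Suc t) (a v)) + (\<Sum>s=1..nS I. lam I s t * (act v s + Eh v s)))"
  proof -
    have "(\<Sum>s=1..nS I. lam I s t * ((\<Sum>v=1..nV I. act v s) + (\<Sum>v=1..nV I. Eh v s)))
        = (\<Sum>s=1..nS I. \<Sum>v=1..nV I. lam I s t * (act v s + Eh v s))"
      by (simp add: sum_distrib_left sum.distrib distrib_left)
    also have "\<dots> = (\<Sum>v=1..nV I. \<Sum>s=1..nS I. lam I s t * (act v s + Eh v s))"
      by (rule sum.swap)
    finally show ?thesis unfolding B_def by (simp add: sum_distrib_left sum.distrib)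
  qed
  moreover have "lam0 I t * Wf I J v (max (Suc t) (a v)) + (\<Sum>s=1..nS I. lam I s t * (act v s + Eh v s))
      = Wf I J v (max t (a v))" if v: "v \<in> {1..nV I}" for v
  proof (cases "a v \<le> t")
    case True
    have WS: "Wf I J v (Suc t) = J v (Suc t)"
    proof (cases "Suc t \<le> nT I")
      case True then show ?thesis by (simp add: Wf_def)
    next
      case False
      then have "Suc t = nT I + 1" using tT by simp
      then show ?thesis using SN2 v by (simp add: Wf_def)
    qed
    have Jt: "J v t = lam0 I t * J v (t + 1) +
          (\<Sum>s=1..nS I. lam I s t * ((1 - xt v s t) * J v (t + 1) + xt v s t * (r v s t + Et v)))"
      unfolding Et_def using SN4 v t by blast
    have mx1: "max (Suc t) (a v) = Suc t" and mx2: "max t (a v) = t" using True by auto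
    have "(\<Sum>s=1..nS I. lam I s t * (act v s + Eh v s))
        = (\<Sum>s=1..nS I. lam I s t * ((1 - xt v s t) * J v (t + 1) + xt v s t * (r v s t + Et v)))"
      by (rule sum.cong[OF refl]) (simp add: act_def Eh_def True WS algebra_simps)
    then show ?thesis unfolding mx1 mx2 WS using Jt tT by (simp add: Wf_def)
  next
    case False
    have mx: "max (Suc t) (a v) = a v" "max t (a v) = a v" using False by auto
    have "(\<Sum>s=1..nS I. lam I s t * (act v s + Eh v s)) = (\<Sum>s=1..nS I. lam I s t) * Wf I J v (a v)"
      unfolding act_def Eh_def using False by (simp add: mx sum_distrib_right)
    then show ?thesis unfolding mx using lam0_sum[of I t] by (simp add: distrib_right[symmetric])
  qed
  ultimately show ?case by simp
qed

lemma one_minus_prod_ge: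
  fixes a :: "nat \<Rightarrow> real"
  assumes "\<And>v. v \<in> A \<Longrightarrow> 0 \<le> a v \<and> a v \<le> 1" and fin: "finite A"
  shows "(1 - exp (-1)) * min (\<Sum>v\<in>A. a v) 1 \<le> 1 - (\<Prod>v\<in>A. 1 - a v)"
proof -
  define S where "S = (\<Sum>v\<in>A. a v)"
  have S0: "0 \<le> S" unfolding S_def using assms by (intro sum_nonneg) auto
  have "(\<Prod>v\<in>A. 1 - a v) \<le> (\<Prod>v\<in>A. exp (- a v))"
  proof (rule prod_mono)
    fix v assume "v \<in> A"
    then show "0 \<le> 1 - a v \<and> 1 - a v \<le> exp (- a v)" using assms exp_ge_add_one_self[of "- a v"] by auto
  qed
  also have "\<dots> = exp (- S)" unfolding S_def using exp_sum[OF fin, of "\<lambda>v. - a v"] by (simp add: sum_negf)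
  finally have P: "(\<Prod>v\<in>A. 1 - a v) \<le> exp (- S)" .
  have "(1 - exp (-1)) * min S 1 \<le> 1 - exp (- S)"
  proof (cases "S \<le> 1")
    case True
    have "exp ((1 - S) *\<^sub>R 0 + S *\<^sub>R (-1)) \<le> (1 - S) * exp 0 + S * exp (-1)"
      by (rule convex_onD[OF exp_convex]) (use True S0 in auto)
    then show ?thesis using True by (simp add: algebra_simps)
  next
    case False
    then have "exp (- S) \<le> exp (-1)" by simp
    then show ?thesis using False by simp
  qed
  then show ?thesis using P unfolding S_def by simp
qed

lemma AA_inP:
  assumes "AA_output I m xseq yseq x"
  shows "inP I x"
proof -
  note A = assms[unfolded AA_output_def]
  have m1: "1 \<le> m" using A by blast
  have x0: "xseq 0 = (\<lambda>v s t. 0)" using A by blast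
  have step: "\<forall>i\<in>{1..m}. inP I (yseq i) \<and> xseq i = (\<lambda>v s t. xseq (i - 1) v s t + yseq i v s t / real m)"
    using A by blast
  have xm: "x = xseq m" using A by blast
  have H: "i \<le> m \<Longrightarrow> (\<forall>v\<in>{1..nV I}. \<forall>s\<in>{1..nS I}. \<forall>t\<in>{1..nT I}. 0 \<le> xseq i v s t \<and> xseq i v s t \<le> real i / real m) \<and>
     (\<forall>v\<in>{1..nV I}. \<forall>t\<in>{1..nT I}.
        (\<Sum>\<tau>=1..t. \<Sum>s=1..nS I. lam I s \<tau> * xseq i v s \<tau> * (1 - GG I (t - \<tau>))) \<le> real i / real m)" for i
  proof (induction i)
    case 0 then show ?case by (simp add: x0)
  next
    case (Suc i)
    note IH = Suc.IH[OF Suc_leD[OF Suc.prems]]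
    have si: "Suc i \<in> {1..m}" using Suc.prems by simp
    have yi: "inP I (yseq (Suc i))" and xi: "xseq (Suc i) = (\<lambda>v s t. xseq i v s t + yseq (Suc i) v s t / real m)"
      using step si by auto
    have mp: "0 < real m" using m1 by simp
    have e1: "real (Suc i) / real m = real i / real m + 1 / real m" by (simp add: add_divide_distrib)
    show ?case
    proof (rule conjI; intro ballI)
      fix v s t assume v: "v \<in> {1..nV I}" and s: "s \<in> {1..nS I}" and t: "t \<in> {1..nT I}"
      have "0 \<le> yseq (Suc i) v s t \<and> yseq (Suc i) v s t \<le> 1" using yi v s t unfolding inP_def by blast
      moreover have "0 \<le> xseq i v s t \<and> xseq i v s t \<le> real i / real m" using IH v s t by blast
      ultimately show "0 \<le> xseq (Suc i) v s t \<and> xseq (Suc i) v s t \<le> real (Suc i) / real m"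
        unfolding xi e1 using mp by (auto intro!: add_mono divide_right_mono)
    next
      fix v t assume v: "v \<in> {1..nV I}" and t: "t \<in> {1..nT I}"
      have c1: "(\<Sum>\<tau>=1..t. \<Sum>s=1..nS I. lam I s \<tau> * xseq i v s \<tau> * (1 - GG I (t - \<tau>))) \<le> real i / real m"
        using IH v t by blast
      have c2: "(\<Sum>\<tau>=1..t. \<Sum>s=1..nS I. lam I s \<tau> * yseq (Suc i) v s \<tau> * (1 - GG I (t - \<tau>))) \<le> 1"
        using yi v t unfolding inP_def by blast
      have "(\<Sum>\<tau>=1..t. \<Sum>s=1..nS I. lam I s \<tau> * xseq (Suc i) v s \<tau> * (1 - GG I (t - \<tau>)))
          = (\<Sum>\<tau>=1..t. \<Sum>s=1..nS I. lam I s \<tau> * xseq i v s \<tau> * (1 - GG I (t - \<tau>)) + (lam I s \<tau> * yseq (Suc i) v s \<tau> * (1 - GG I (t - \<tau>))) / real m)"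
        unfolding xi by (intro sum.cong refl) (simp add: algebra_simps add_divide_distrib)
      also have "\<dots> = (\<Sum>\<tau>=1..t. \<Sum>s=1..nS I. lam I s \<tau> * xseq i v s \<tau> * (1 - GG I (t - \<tau>)))
          + (\<Sum>\<tau>=1..t. \<Sum>s=1..nS I. lam I s \<tau> * yseq (Suc i) v s \<tau> * (1 - GG I (t - \<tau>))) / real m"
        by (simp add: sum.distrib sum_divide_distrib)
      also have "\<dots> \<le> real i / real m + 1 / real m"
        using c1 c2 mp by (intro add_mono divide_right_mono) auto
      finally show "(\<Sum>\<tau>=1..t. \<Sum>s=1..nS I. lam I s \<tau> * xseq (Suc i) v s \<tau> * (1 - GG I (t - \<tau>))) \<le> real (Suc i) / real m"
        unfolding e1 .
    qed
  qed
  have "real m / real m = 1" using m1 by simp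
  then show ?thesis using H[of m] unfolding inP_def xm by auto
qed

lemma SQ_inP:
  assumes "SQ_output I x" shows "inP I x"
  using assms unfolding SQ_output_def SQ_feas_def inP_def by blast

theorem theorem1:
  fixes I :: inst and q :: real
    and xLP xAA xSQ xs xt r :: sol and J :: "nat \<Rightarrow> nat \<Rightarrow> real"
    and m :: nat and xseq yseq :: "nat \<Rightarrow> sol"
  assumes "valid_inst I"
    and "is_mdhr I q"
    and "LP_opt I xLP"
    and "AA_output I m xseq yseq xAA"
    and "SQ_output I xSQ"
    and "xstar_choice I xLP xAA xSQ xs"
    and "SN_arrays I xs xt r J"
  shows "POL_SN I xt \<ge> (1 / (2 - q)) * (1 - exp (-1)) * LPval I"
proof -
  note valid = assms(1) and mdhr = assms(2) and SN = assms(7)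
  have inLP: "inP I xLP" using assms(3) unfolding LP_opt_def by blast
  have inxs: "inP I xs"
  proof -
    have "xs \<in> {xLP, xAA, xSQ}" using assms(6) unfolding xstar_choice_def by blast
    then show ?thesis using inLP AA_inP[OF assms(4)] SQ_inP[OF assms(5)] by auto
  qed
  note SNu = SN[unfolded SN_arrays_def]
  have SN1: "\<forall>v\<in>{1..nV I}. \<forall>s\<in>{1..nS I}. \<forall>t\<in>{1..nT I}.
        r v s t = pm I v s * (\<Prod>u\<in>{1..<v}. 1 - xt u s t * pm I u s)" using SNu by blast
  have SN2: "\<forall>v\<in>{1..nV I}. J v (nT I + 1) = 0" using SNu by blast
  have SN3: "\<forall>v\<in>{1..nV I}. \<forall>s\<in>{1..nS I}. \<forall>t\<in>{1..nT I}.
        xt v s t = xs v s t *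
          (if r v s t + (\<Sum>\<tau>=t+1..nT I. gg I (\<tau> - t) * J v \<tau>) \<ge> J v (t + 1) then 1 else 0)"
    using SNu by blast
  have xs01: "0 \<le> xs v s t \<and> xs v s t \<le> 1" if "v \<in> {1..nV I}" "s \<in> {1..nS I}" "t \<in> {1..nT I}" for v s t
    using inxs that unfolding inP_def by blast
  have xtxs: "0 \<le> xt v s t \<and> xt v s t \<le> xs v s t" if "v \<in> {1..nV I}" "s \<in> {1..nS I}" "t \<in> {1..nT I}" for v s t
    using SN3 that xs01[OF that] by auto
  have xt01: "\<forall>v\<in>{1..nV I}. \<forall>s\<in>{1..nS I}. \<forall>t\<in>{1..nT I}. 0 \<le> xt v s t \<and> xt v s t \<le> 1"
    using xtxs xs01 by force
  have pm01: "0 \<le> pm I v s \<and> pm I v s \<le> 1" if "v \<in> {1..nV I}" "s \<in> {1..nS I}" for v s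
    using valid that unfolding valid_inst_def by auto
  have lamnn: "0 \<le> lam I s t" if "s \<in> {1..nS I}" "t \<in> {1..nT I}" for s t
    using valid that unfolding valid_inst_def by auto
  have pol: "(\<Sum>v=1..nV I. Wf I J v (max 1 0)) \<le> POL_SN I xt"
    unfolding POL_SN_def using polval_lb[OF valid SN xt01, of 1 "nT I" "\<lambda>v. 0"] by simp
  have Wf1: "Wf I J v 1 = J v 1" if "v \<in> {1..nV I}" for v
  proof (cases "1 \<le> nT I")
    case True then show ?thesis by (simp add: Wf_def)
  next
    case False
    then have "nT I = 0" by simp
    then show ?thesis using SN2 that by (simp add: Wf_def)
  qed
  have polJ: "(\<Sum>v=1..nV I. J v 1) \<le> POL_SN I xt"
    using pol Wf1 by simp
  define R where "R v = (\<Sum>t=1..nT I. \<Sum>s=1..nS I. lam I s t * xs v s t * r v s t)" for v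
  have keyv: "R v \<le> (2 - q) * J v 1" if v: "v \<in> {1..nV I}" for v
    unfolding R_def
  proof (rule key[OF valid mdhr SN v])
    show "\<forall>s\<in>{1..nS I}. \<forall>t\<in>{1..nT I}. 0 \<le> xs v s t \<and> xs v s t \<le> 1" using xs01 v by blast
    show "\<forall>t\<in>{1..nT I}. (\<Sum>\<tau>=1..t. \<Sum>s=1..nS I. lam I s \<tau> * xs v s \<tau> * (1 - GG I (t - \<tau>))) \<le> 1"
      using inxs v unfolding inP_def by blast
  qed
  have fx: "fexa I xs \<le> (\<Sum>v=1..nV I. R v)"
  proof -
    have "fexa I xs \<le> (\<Sum>t=1..nT I. \<Sum>s=1..nS I. \<Sum>v=1..nV I. lam I s t * xs v s t * r v s t)"
      unfolding fexa_def
    proof (intro sum_mono)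
      fix t s assume t: "t \<in> {1..nT I}" and s: "s \<in> {1..nS I}"
      have "1 - (\<Prod>v\<in>{1..nV I}. 1 - xs v s t * pm I v s)
         = (\<Sum>v=1..nV I. xs v s t * pm I v s * (\<Prod>u\<in>{1..<v}. 1 - xs u s t * pm I u s))"
        by (rule prod_tele)
      also have "\<dots> \<le> (\<Sum>v=1..nV I. xs v s t * r v s t)"
      proof (rule sum_mono)
        fix v assume v: "v \<in> {1..nV I}"
        have "(\<Prod>u\<in>{1..<v}. 1 - xs u s t * pm I u s) \<le> (\<Prod>u\<in>{1..<v}. 1 - xt u s t * pm I u s)"
        proof (rule prod_mono)
          fix u assume "u \<in> {1..<v}"
          then have u: "u \<in> {1..nV I}" using v by auto
          have "xs u s t * pm I u s \<le> 1" using xs01[OF u s t] pm01[OF u s] by (intro mult_le_one) auto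
          moreover have "xt u s t * pm I u s \<le> xs u s t * pm I u s"
            using xtxs[OF u s t] pm01[OF u s] by (intro mult_right_mono) auto
          ultimately show "0 \<le> 1 - xs u s t * pm I u s \<and> 1 - xs u s t * pm I u s \<le> 1 - xt u s t * pm I u s"
            by simp
        qed
        moreover have "0 \<le> xs v s t * pm I v s" using xs01[OF v s t] pm01[OF v s] by simp
        ultimately have "xs v s t * pm I v s * (\<Prod>u\<in>{1..<v}. 1 - xs u s t * pm I u s)
            \<le> xs v s t * pm I v s * (\<Prod>u\<in>{1..<v}. 1 - xt u s t * pm I u s)"
          by (rule mult_left_mono)
        also have "\<dots> = xs v s t * r v s t" using SN1 v s t by (simp add: ac_simps)
        finally show "xs v s t * pm I v s * (\<Prod>u\<in>{1..<v}. 1 - xs u s t * pm I u s) \<le> xs v s t * r v s t" .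
      qed
      finally have "lam I s t * (1 - (\<Prod>v\<in>{1..nV I}. 1 - xs v s t * pm I v s)) \<le> lam I s t * (\<Sum>v=1..nV I. xs v s t * r v s t)"
        by (rule mult_left_mono) (rule lamnn[OF s t])
      then show "lam I s t * (1 - (\<Prod>v\<in>{1..nV I}. 1 - xs v s t * pm I v s)) \<le> (\<Sum>v=1..nV I. lam I s t * xs v s t * r v s t)"
        by (simp add: sum_distrib_left ac_simps)
    qed
    also have "\<dots> = (\<Sum>t=1..nT I. \<Sum>v=1..nV I. \<Sum>s=1..nS I. lam I s t * xs v s t * r v s t)"
      by (rule sum.cong[OF refl], rule sum.swap)
    also have "\<dots> = (\<Sum>v=1..nV I. R v)" unfolding R_def by (rule sum.swap)
    finally show ?thesis .
  qed
  have q1: "q \<le> 1" by (rule q_le1[OF mdhr])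
  have fJ: "fexa I xs \<le> (2 - q) * (\<Sum>v=1..nV I. J v 1)"
  proof -
    have "(\<Sum>v=1..nV I. R v) \<le> (\<Sum>v=1..nV I. (2 - q) * J v 1)" using keyv by (rule sum_mono)
    then show ?thesis using fx by (simp add: sum_distrib_left)
  qed
  have LPv: "LPval I = LPobj I xLP"
    unfolding LPval_def
    by (rule cSup_eq_maximum) (use inLP assms(3) in \<open>auto simp: LP_opt_def\<close>)
  have fLP: "(1 - exp (-1)) * LPobj I xLP \<le> fexa I xLP"
  proof -
    have "(1 - exp (-1)) * LPobj I xLP = (\<Sum>t=1..nT I. \<Sum>s=1..nS I.
      lam I s t * ((1 - exp (-1)) * min (\<Sum>v=1..nV I. xLP v s t * pm I v s) 1))"
      unfolding LPobj_def by (simp add: sum_distrib_left ac_simps)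
    also have "\<dots> \<le> fexa I xLP"
      unfolding fexa_def
    proof (intro sum_mono mult_left_mono)
      fix t s assume t: "t \<in> {1..nT I}" and s: "s \<in> {1..nS I}"
      show "0 \<le> lam I s t" by (rule lamnn[OF s t])
      show "(1 - exp (-1)) * min (\<Sum>v=1..nV I. xLP v s t * pm I v s) 1 \<le> 1 - (\<Prod>v=1..nV I. 1 - xLP v s t * pm I v s)"
      proof (rule one_minus_prod_ge)
        fix v assume v: "v \<in> {1..nV I}"
        have "0 \<le> xLP v s t \<and> xLP v s t \<le> 1" using inLP v s t unfolding inP_def by blast
        then show "0 \<le> xLP v s t * pm I v s \<and> xLP v s t * pm I v s \<le> 1"
          using pm01[OF v s] by (auto intro: mult_le_one)
      qed simp
    qed
    finally show ?thesis .
  qed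
  have fxs: "fexa I xLP \<le> fexa I xs" using assms(6) unfolding xstar_choice_def by blast
  have q2: "0 < 2 - q" using q1 by simp
  have "(1 / (2 - q)) * (1 - exp (-1)) * LPval I = (1 / (2 - q)) * ((1 - exp (-1)) * LPobj I xLP)"
    unfolding LPv by simp
  also have "\<dots> \<le> (1 / (2 - q)) * fexa I xs"
    using fLP fxs q2 by (intro mult_left_mono) auto
  also have "\<dots> \<le> (1 / (2 - q)) * ((2 - q) * (\<Sum>v=1..nV I. J v 1))"
    using fJ q2 by (intro mult_left_mono) auto
  also have "\<dots> = (\<Sum>v=1..nV I. J v 1)" using q2 by simp
  also have "\<dots> \<le> POL_SN I xt" by (rule polJ)
  finally show ?thesis .
qed


end
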